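(* For all non-negative integers $m$ and $l$, $$\binom{m+l}{m}=\sum_{n=0}^{m}\frac{1}{2^{m+n}}\binom{m+n}{m}\binom{2l+m-n}{2l}.$$ *)

theory Defs
  imports Complex_Main
begin

end

theory Submission
  imports Defs
begin

definition tt :: "nat \<Rightarrow> nat \<Rightarrow> nat \<Rightarrow> nat" where
  "tt m a k = 2^k * ((2*m - k) choose m) * ((a + k) choose k)"

lemma tt_zero: "k > m \<Longrightarrow> m > 0 \<Longrightarrow> tt m a k = 0"
proof -
  assume "k > m" "m > 0"
  hence "2*m-k < m" by linarith
  thus ?thesis unfolding tt_def by (simp add: binomial_eq_0)
qed

lemma rec1:
  assumes "k \<le> m"
  shows "(k+1)*(2*m-k) * tt m a (k+1) = 2*(m-k)*(a+k+1) * tt m a k"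
proof -
  have b1: "(k+1) * ((a+k+1) choose (k+1)) = (a+k+1) * ((a+k) choose k)"
    using Suc_times_binomial[of k "a+k"] by simp
  have b2: "(2*m-k) * ((2*m-k-1) choose m) = (m-k) * ((2*m-k) choose m)"
    using binomial_absorb_comp[of "2*m-k" m] assms by (simp add: algebra_simps)
  have b2': "(2*m-k) * ((2*m-(k+1)) choose m) = (m-k) * ((2*m-k) choose m)"
    using b2 by simp
  have b1': "(k+1) * ((a+(k+1)) choose (k+1)) = (a+k+1) * ((a+k) choose k)"
    using b1 by simp
  have "(k+1)*(2*m-k) * tt m a (k+1) = 2^(k+1) * ((2*m-k) * ((2*m-(k+1)) choose m)) * ((k+1) * ((a+(k+1)) choose (k+1)))"
    unfolding tt_def[of m a "k+1"] by (simp only: ac_simps)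
  also have "\<dots> = 2^(k+1) * ((m-k) * ((2*m-k) choose m)) * ((a+k+1) * ((a+k) choose k))"
    by (simp only: b1' b2')
  also have "\<dots> = 2*(m-k)*(a+k+1) * tt m a k"
    unfolding tt_def by (simp add: algebra_simps)
  finally show ?thesis .
qed

lemma rec2: "(a+1)*(a+2) * ((a+2+k) choose k) = (a+k+1)*(a+k+2) * ((a+k) choose k)"
proof -
  have s1: "(a+k) choose k = (a+k) choose a" using binomial_symmetric[of a "a+k"] by simp
  have s2: "(a+2+k) choose k = (a+2+k) choose (a+2)" using binomial_symmetric[of k "a+2+k"] by simp
  have e1: "(a+1) * ((a+k+1) choose (a+1)) = (a+k+1) * ((a+k) choose a)"
    using Suc_times_binomial[of a "a+k"] by simp
  have e2: "(a+2) * ((a+k+2) choose (a+2)) = (a+k+2) * ((a+k+1) choose (a+1))"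
    using Suc_times_binomial[of "a+1" "a+k+1"] by simp
  have "(a+1)*(a+2) * ((a+2+k) choose k) = (a+1) * ((a+2) * ((a+k+2) choose (a+2)))"
  proof -
    have eq: "a+2+k = a+k+2" by simp
    show ?thesis unfolding s2 unfolding eq by (simp only: ac_simps)
  qed
  also have "\<dots> = (a+k+2) * ((a+1) * ((a+k+1) choose (a+1)))" unfolding e2 by (simp only: ac_simps)
  also have "\<dots> = (a+k+1)*(a+k+2) * ((a+k) choose k)" unfolding e1 s1 by (simp only: ac_simps)
  finally show ?thesis .
qed

lemma tele:
  "(\<Sum>k\<in>{0..m}. int (tt m a k) * (int k^2 + (2*int a+3)*int k - 2*int m*(int a+1))) = 0"
proof -
  define H where "H k = int k * (2*int m + 1 - int k) * int (tt m a k)" for k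
  have step: "int (tt m a k) * (int k^2 + (2*int a+3)*int k - 2*int m*(int a+1)) = H k - H (Suc k)"
    if "k \<le> m" for k
  proof -
    have r: "int (k+1) * int (2*m-k) * int (tt m a (k+1)) = 2 * int (m-k) * int (a+k+1) * int (tt m a k)"
    proof -
      have "int ((k+1)*(2*m-k) * tt m a (k+1)) = int (2*(m-k)*(a+k+1) * tt m a k)"
        using rec1[OF that, of a] by (rule arg_cong)
      thus ?thesis by (simp only: of_nat_mult of_nat_numeral)
    qed
    have "H (Suc k) = 2 * (int m - int k) * (int a + int k + 1) * int (tt m a k)"
      using r that unfolding H_def by (simp add: of_nat_diff algebra_simps)
    then show ?thesis unfolding H_def by (simp add: algebra_simps power2_eq_square)
  qed
  have "(\<Sum>k\<in>{0..m}. int (tt m a k) * (int k^2 + (2*int a+3)*int k - 2*int m*(int a+1)))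
      = (\<Sum>k<Suc m. H k - H (Suc k))"
    by (rule sum.cong) (auto simp: step)
  also have "\<dots> = H 0 - H (Suc m)" by (rule sum_lessThan_telescope')
  also have "\<dots> = 0" unfolding H_def by (cases "m = 0") (simp_all add: tt_zero)
  finally show ?thesis .
qed

lemma recl: "(a+2) * (\<Sum>k\<in>{0..m}. tt m (a+2) k) = (2*m+a+2) * (\<Sum>k\<in>{0..m}. tt m a k)"
proof -
  have pt: "int ((a+1)*(a+2) * tt m (a+2) k) = int ((a+1)*(2*m+a+2) * tt m a k)
      + int (tt m a k) * (int k^2 + (2*int a+3)*int k - 2*int m*(int a+1))" for k
  proof -
    have "(a+1)*(a+2) * tt m (a+2) k = (a+k+1)*(a+k+2) * tt m a k"
    proof -
      have "(a+1)*(a+2) * tt m (a+2) k = 2^k * ((2*m - k) choose m) * ((a+1)*(a+2) * ((a+2+k) choose k))"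
        unfolding tt_def by (simp only: ac_simps)
      also have "\<dots> = 2^k * ((2*m - k) choose m) * ((a+k+1)*(a+k+2) * ((a+k) choose k))"
        by (simp only: rec2)
      also have "\<dots> = (a+k+1)*(a+k+2) * tt m a k"
        unfolding tt_def by (simp only: ac_simps)
      finally show ?thesis .
    qed
    hence "int ((a+1)*(a+2) * tt m (a+2) k) = int ((a+k+1)*(a+k+2) * tt m a k)" by simp
    thus ?thesis by (simp add: algebra_simps power2_eq_square)
  qed
  have "int ((a+1) * ((a+2) * (\<Sum>k\<in>{0..m}. tt m (a+2) k)))
       = (\<Sum>k\<in>{0..m}. int ((a+1)*(a+2) * tt m (a+2) k))"
    by (simp only: of_nat_sum[symmetric] sum_distrib_left mult.assoc)
  also have "\<dots> = (\<Sum>k\<in>{0..m}. int ((a+1)*(2*m+a+2) * tt m a k))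
      + (\<Sum>k\<in>{0..m}. int (tt m a k) * (int k^2 + (2*int a+3)*int k - 2*int m*(int a+1)))"
    by (simp only: pt sum.distrib)
  also have "\<dots> = int ((a+1) * ((2*m+a+2) * (\<Sum>k\<in>{0..m}. tt m a k)))"
    unfolding tele by (simp only: add_0_right of_nat_sum[symmetric] sum_distrib_left mult.assoc)
  finally have "(a+1) * ((a+2) * (\<Sum>k\<in>{0..m}. tt m (a+2) k)) = (a+1) * ((2*m+a+2) * (\<Sum>k\<in>{0..m}. tt m a k))"
    by linarith
  thus ?thesis by (subst (asm) mult_left_cancel) simp_all
qed

lemma base: "(\<Sum>k\<in>{0..m}. tt m 0 k) = 4^m"
proof -
  have "(\<Sum>k\<le>m. real (m + k choose k) / 2 ^ k) = 2 ^ m"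
    using gbinomial_sum_nat_pow2[of m] by (simp add: binomial_gbinomial)
  hence "2^m * (\<Sum>k\<in>{0..m}. real (m + k choose k) / 2 ^ k) = 4 ^ m"
    by (simp add: atLeast0AtMost power_mult_distrib[symmetric])
  hence "(\<Sum>k\<in>{0..m}. 2^m * (real (m + k choose k) / 2 ^ k)) = 4 ^ m"
    by (simp add: sum_distrib_left)
  also have "(\<Sum>k\<in>{0..m}. 2^m * (real (m + k choose k) / 2 ^ k))
     = (\<Sum>k\<in>{0..m}. 2^m * (real (m + (m+0-k) choose (m+0-k)) / 2 ^ (m+0-k)))"
    by (rule sum.atLeastAtMost_rev)
  also have "\<dots> = (\<Sum>k\<in>{0..m}. real (tt m 0 k))"
  proof (rule sum.cong)
    fix k assume k: "k \<in> {0..m}"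
    have c: "(2*m-k) choose (m-k) = (2*m-k) choose m"
      using binomial_symmetric[of m "2*m-k"] k by (simp add: diff_diff_left)
    have mm: "m + (m - k) = 2*m - k" using k by simp
    have "2^m = (2::real)^(m-k) * 2^k" using k by (simp add: power_add[symmetric])
    thus "2^m * (real (m + (m+0-k) choose (m+0-k)) / 2 ^ (m+0-k)) = real (tt m 0 k)"
      unfolding tt_def using k c by (simp add: field_simps mm)
  qed simp
  finally have "real (\<Sum>k\<in>{0..m}. tt m 0 k) = real ((4::nat)^m)" by simp
  thus ?thesis by (simp only: of_nat_eq_iff)
qed

lemma mainT: "(\<Sum>k\<in>{0..m}. tt m (2*l) k) = 4^m * ((m+l) choose m)"
proof (induction l)
  case 0 then show ?case using base by simp
next
  case (Suc l)
  have "(2*l+2) * (\<Sum>k\<in>{0..m}. tt m (2*l+2) k) = (2*m+2*l+2) * (4^m * ((m+l) choose m))"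
    using recl[of "2*l" m] Suc by simp
  hence "2*((l+1) * (\<Sum>k\<in>{0..m}. tt m (2*l+2) k)) = 2*((m+l+1) * (4^m * ((m+l) choose m)))"
    by (simp only: ac_simps distrib_left distrib_right mult_2)
  hence "(l+1) * (\<Sum>k\<in>{0..m}. tt m (2*l+2) k) = (m+l+1) * (4^m * ((m+l) choose m))"
    by simp
  moreover have "(m+l+1) * ((m+l) choose m) = (l+1) * ((m+l+1) choose m)"
    using Suc_times_binomial_add[of m l] Suc_times_binomial[of m "m+l"] by simp
  ultimately have "(l+1) * (\<Sum>k\<in>{0..m}. tt m (2*l+2) k) = (l+1) * (4^m * ((m+l+1) choose m))"
    by (simp only: mult.left_commute[of "m+l+1"] mult.left_commute[of "l+1"])
  hence "(\<Sum>k\<in>{0..m}. tt m (2*l+2) k) = 4^m * ((m+l+1) choose m)"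
    by (subst (asm) mult_left_cancel) simp_all
  thus ?case by (simp add: ac_simps)
qed

theorem mainTheorem3:
  fixes m l :: nat
  shows "real ((m + l) choose m) =
    (\<Sum>n = 0..m. (1 / 2 ^ (m + n)) * real ((m + n) choose m) * real ((2 * l + m - n) choose (2 * l)))"
proof -
  have "(\<Sum>n = 0..m. (1 / 2 ^ (m + n)) * real ((m + n) choose m) * real ((2 * l + m - n) choose (2 * l)))
     = (\<Sum>n = 0..m. (1 / 2 ^ (m + (m+0-n))) * real ((m + (m+0-n)) choose m) * real ((2 * l + m - (m+0-n)) choose (2 * l)))"
    by (rule sum.atLeastAtMost_rev)
  also have "\<dots> = (\<Sum>k = 0..m. real (tt m (2*l) k) / 4^m)"
  proof (rule sum.cong)
    fix k assume k: "k \<in> {0..m}"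
    have e1: "m + (m+0-k) = 2*m-k" using k by simp
    have e2: "2 * l + m - (m+0-k) = 2*l+k" using k by simp
    have e3: "(2*l+k) choose (2*l) = (2*l+k) choose k"
      using binomial_symmetric[of k "2*l+k"] by simp
    have e5: "(4::real)^m = 2^(2*m)" by (simp add: power_mult)
    have e4: "(4::real)^m = 2^(2*m-k) * 2^k" using k unfolding e5
      by (simp add: power_add[symmetric])
    show "(1 / 2 ^ (m + (m+0-k))) * real ((m + (m+0-k)) choose m) * real ((2 * l + m - (m+0-k)) choose (2 * l))
       = real (tt m (2*l) k) / 4^m"
      unfolding e1 e2 e3 e4 tt_def by (simp add: field_simps)
  qed simp
  also have "\<dots> = real (\<Sum>k = 0..m. tt m (2*l) k) / 4^m"
    by (simp add: sum_divide_distrib)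
  also have "\<dots> = real ((m + l) choose m)"
    unfolding mainT by simp
  finally show ?thesis ..
qed

end
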